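(* Let $w=(u,v)\in\mathrm{WI}_n\times\mathrm{Cay}_n$. Then $\mathrm{Des}(u)\subseteq\mathrm{Des}(v)$ if and only if $(w^T)^T=w$. Moreover, $T$ is an involution on $\mathrm{Bur}_n$.
   Context: $\mathrm{Cay}_n$ is the set of Cayley permutations of length $n$ (words of positive integers in which every integer from $1$ to the maximum occurs), and $\mathrm{WI}_n$ the set of weakly increasing elements of $\mathrm{Cay}_n$. A pair $(u,v)\in\mathrm{WI}_n\times\mathrm{Cay}_n$ is viewed as a biword with columns $\binom{u(i)}{v(i)}$, $i=1,\dots,n$. The Burge transpose $(u,v)^T$ is obtained by turning every column $\binom{a}{b}$ upside down into $\binom{b}{a}$ and then sorting the columns in increasing order of top entry, breaking ties by decreasing order of bottom entry; it again lies in $\mathrm{WI}_n\times\mathrm{Cay}_n$. The weak descent set of a word $v$ of length $n$ is $\mathrm{Des}(v)=\{i\in[n-1]:v(i)\ge v(i+1)\}$. $\mathrm{Bur}_n=\{(u,v)\in\mathrm{WI}_n\times\mathrm{Cay}_n:\mathrm{Des}(u)\subseteq\mathrm{Des}(v)\}$ (Burge words). *)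

theory Defs
  imports Main "HOL-Library.Product_Lexorder"
begin

text \<open>Words are lists of naturals; position i (1-based, as in the paper) is list index i-1.\<close>

definition cayley :: "nat list \<Rightarrow> bool" where
  "cayley w \<longleftrightarrow> (\<exists>m. set w = {1..m})"

definition Cay :: "nat \<Rightarrow> nat list set" where
  "Cay n = {w. length w = n \<and> cayley w}"

definition WI :: "nat \<Rightarrow> nat list set" where
  "WI n = {w. w \<in> Cay n \<and> sorted w}"

definition Des :: "nat list \<Rightarrow> nat set" where
  "Des v = {i. 1 \<le> i \<and> i < length v \<and> v ! (i - 1) \<ge> v ! i}"

definition burge_transpose :: "nat list \<times> nat list \<Rightarrow> nat list \<times> nat list" where
  "burge_transpose w =
     (let cols = map (\<lambda>(a, b). (b, a)) (zip (fst w) (snd w));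
          sorted_cols = sort_key (\<lambda>(t, b). (t, - int b)) cols
      in (map fst sorted_cols, map snd sorted_cols))"

definition Bur :: "nat \<Rightarrow> (nat list \<times> nat list) set" where
  "Bur n = {(u, v). u \<in> WI n \<and> v \<in> Cay n \<and> Des u \<subseteq> Des v}"

end

theory Submission
  imports Defs "HOL-Library.Multiset"
begin

definition bkey :: "nat \<times> nat \<Rightarrow> nat \<times> int" where
  "bkey = (\<lambda>(t, b). (t, - int b))"

lemma bkey_inj: "inj bkey"
  by (auto simp: inj_def bkey_def)

lemma sort_bkey_mset:
  assumes "mset xs = mset ys"
  shows "sort_key bkey xs = sort_key bkey ys"
  by (rule sort_key_inj_key_eq) (use assms bkey_inj in \<open>auto intro: inj_on_subset\<close>)

definition sw :: "nat \<times> nat \<Rightarrow> nat \<times> nat" where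
  "sw = (\<lambda>(a, b). (b, a))"

lemma bt_eq: "burge_transpose (u, v) =
   (map fst (sort_key bkey (map sw (zip u v))), map snd (sort_key bkey (map sw (zip u v))))"
  unfolding burge_transpose_def bkey_def sw_def Let_def by simp

lemma sw_sw: "map sw (map sw xs) = xs"
  by (induct xs) (auto simp: sw_def)

lemma btt_eq:
  "burge_transpose (burge_transpose (u, v)) =
     (map fst (sort_key bkey (zip u v)), map snd (sort_key bkey (zip u v)))"
proof -
  let ?S = "sort_key bkey (map sw (zip u v))"
  have z: "zip (map fst ?S) (map snd ?S) = ?S" by (simp add: zip_map_fst_snd)
  have "mset (map sw ?S) = mset (zip u v)"
    by (metis mset_map mset_sort sw_sw)
  then have "sort_key bkey (map sw ?S) = sort_key bkey (zip u v)"
    by (rule sort_bkey_mset)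
  then show ?thesis unfolding bt_eq[of u v] bt_eq z by simp
qed

lemma btt_id_iff:
  assumes "length u = length v"
  shows "burge_transpose (burge_transpose (u, v)) = (u, v) \<longleftrightarrow> sorted (map bkey (zip u v))"
proof
  assume h: "burge_transpose (burge_transpose (u, v)) = (u, v)"
  have "sort_key bkey (zip u v) = zip u v"
    using h unfolding btt_eq by (metis prod.inject zip_map_fst_snd)
  then show "sorted (map bkey (zip u v))" by (metis sorted_sort_key)
next
  assume "sorted (map bkey (zip u v))"
  then have "sort_key bkey (zip u v) = zip u v" by (rule sort_key_id_if_sorted)
  then show "burge_transpose (burge_transpose (u, v)) = (u, v)"
    unfolding btt_eq using assms by simp
qed

lemma sorted_bkey_iff:
  assumes "length u = length v" "sorted u"
  shows "sorted (map bkey (zip u v)) \<longleftrightarrow> Des u \<subseteq> Des v"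
proof -
  have "sorted (map bkey (zip u v)) \<longleftrightarrow>
     (\<forall>i. Suc i < length u \<longrightarrow> bkey (u!i, v!i) \<le> bkey (u!Suc i, v!Suc i))"
    using assms(1) by (simp add: sorted_iff_nth_Suc)
  also have "\<dots> \<longleftrightarrow> (\<forall>i. Suc i < length u \<longrightarrow> u!i = u!Suc i \<longrightarrow> v!i \<ge> v!Suc i)"
  proof -
    have "u!i \<le> u!Suc i" if "Suc i < length u" for i
      using assms(2) that by (simp add: sorted_iff_nth_Suc)
    then show ?thesis
      by (auto simp: bkey_def less_eq_prod_def) (metis le_neq_implies_less)+
  qed
  also have "\<dots> \<longleftrightarrow> Des u \<subseteq> Des v"
  proof
    assume H: "\<forall>i. Suc i < length u \<longrightarrow> u!i = u!Suc i \<longrightarrow> v!i \<ge> v!Suc i"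
    show "Des u \<subseteq> Des v"
    proof
      fix i assume "i \<in> Des u"
      then have i: "1 \<le> i" "i < length u" "u!(i-1) \<ge> u!i" by (auto simp: Des_def)
      then obtain j where j: "i = Suc j" by (cases i) auto
      have "u!j \<le> u!Suc j" using assms(2) i j by (simp add: sorted_iff_nth_Suc)
      then have "u!j = u!Suc j" using i j by simp
      then have "v!j \<ge> v!Suc j" using H i j by auto
      then show "i \<in> Des v" using i j assms(1) by (auto simp: Des_def)
    qed
  next
    assume H: "Des u \<subseteq> Des v"
    show "\<forall>i. Suc i < length u \<longrightarrow> u!i = u!Suc i \<longrightarrow> v!i \<ge> v!Suc i"
    proof (intro allI impI)
      fix i assume a: "Suc i < length u" "u!i = u!Suc i"
      then have "Suc i \<in> Des u" by (auto simp: Des_def)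
      then have "Suc i \<in> Des v" using H by auto
      then show "v!i \<ge> v!Suc i" by (auto simp: Des_def)
    qed
  qed
  finally show ?thesis .
qed

lemma part1:
  assumes "u \<in> WI n" "v \<in> Cay n"
  shows "Des u \<subseteq> Des v \<longleftrightarrow> burge_transpose (burge_transpose (u, v)) = (u, v)"
proof -
  have l: "length u = length v" "sorted u" using assms by (auto simp: WI_def Cay_def)
  show ?thesis using btt_id_iff[OF l(1)] sorted_bkey_iff[OF l] by simp
qed

lemma bt_in:
  assumes "u \<in> WI n" "v \<in> Cay n"
  shows "fst (burge_transpose (u, v)) \<in> WI n \<and> snd (burge_transpose (u, v)) \<in> Cay n
     \<and> burge_transpose (burge_transpose (burge_transpose (u, v))) = burge_transpose (u, v)"
proof -
  let ?S = "sort_key bkey (map sw (zip u v))"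
  have l: "length u = n" "length v = n" using assms by (auto simp: WI_def Cay_def)
  have setS: "set ?S = sw ` set (zip u v)" by simp
  have "fst ` sw ` set (zip u v) = snd ` set (zip u v)"
    by (force simp: sw_def image_iff)
  also have "\<dots> = set v" using l by (metis map_snd_zip set_map)
  finally have s1: "set (map fst ?S) = set v" by simp
  have "snd ` sw ` set (zip u v) = fst ` set (zip u v)"
    by (force simp: sw_def image_iff)
  also have "\<dots> = set u" using l by (metis map_fst_zip set_map)
  finally have s2: "set (map snd ?S) = set u" by simp
  have ss: "sorted (map bkey ?S)" by simp
  have "sorted (map fst ?S)"
  proof -
    have "map fst ?S = map fst (map bkey ?S)" by (simp add: bkey_def case_prod_beta)
    moreover have "sorted (map fst (map bkey ?S))"
      unfolding sorted_iff_nth_mono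
    proof (intro allI impI)
      fix i j assume ij: "i \<le> j" "j < length (map fst (map bkey ?S))"
      have "bkey (?S!i) \<le> bkey (?S!j)" using ss ij unfolding sorted_iff_nth_mono by auto
      then show "map fst (map bkey ?S) ! i \<le> map fst (map bkey ?S) ! j"
        using ij by (auto simp: less_eq_prod_def)
    qed
    ultimately show ?thesis by (simp only:)
  qed
  then have "map fst ?S \<in> WI n" using s1 l assms
    by (auto simp: WI_def Cay_def cayley_def)
  moreover have "map snd ?S \<in> Cay n" using s2 l assms
    by (auto simp: WI_def Cay_def cayley_def)
  moreover have "burge_transpose (burge_transpose (map fst ?S, map snd ?S)) = (map fst ?S, map snd ?S)"
    using ss by (subst btt_id_iff) (simp_all add: zip_map_fst_snd)
  ultimately show ?thesis unfolding bt_eq[of u v] by simp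
qed

theorem lemma3p1:
  fixes n :: nat
  shows "(\<forall>u v. u \<in> WI n \<longrightarrow> v \<in> Cay n \<longrightarrow>
           (Des u \<subseteq> Des v \<longleftrightarrow> burge_transpose (burge_transpose (u, v)) = (u, v)))
         \<and> burge_transpose ` Bur n \<subseteq> Bur n
         \<and> (\<forall>w \<in> Bur n. burge_transpose (burge_transpose w) = w)"
proof (intro conjI allI impI ballI subsetI)
  fix u v assume "u \<in> WI n" "v \<in> Cay n"
  then show "Des u \<subseteq> Des v \<longleftrightarrow> burge_transpose (burge_transpose (u, v)) = (u, v)"
    by (rule part1)
next
  fix x assume "x \<in> burge_transpose ` Bur n"
  then obtain u v where uv: "(u, v) \<in> Bur n" and x: "x = burge_transpose (u, v)" by auto
  then have a: "u \<in> WI n" "v \<in> Cay n" by (auto simp: Bur_def)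
  note b = bt_in[OF a]
  obtain u' v' where x': "x = (u', v')" by (cases x)
  have "Des u' \<subseteq> Des v'" using b part1[of u' n v'] x x' by (metis fst_conv snd_conv)
  then show "x \<in> Bur n" using b x x' by (auto simp: Bur_def)
next
  fix w assume "w \<in> Bur n"
  then show "burge_transpose (burge_transpose w) = w"
    using part1 by (auto simp: Bur_def)
qed

end
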